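(* Let $\{R_\alpha\}_{\alpha\in\Lambda}$ be a family of rings and, for each $\alpha$, let $I_\alpha$ be an ideal of $R_\alpha$. Put $R=\prod_{\alpha} R_\alpha$ and $I=\prod_\alpha I_\alpha$ (an ideal of $R$). Then $R$ is weakly $I$-clean if and only if every $R_\alpha$ is weakly $I_\alpha$-clean and at most one $R_\alpha$ fails to be $I_\alpha$-clean.
   Context: All rings are associative with identity. $Idem(R)$ denotes the set of idempotents of $R$. For an ideal $I$ of a ring $R$: $R$ is $I$-clean if for every $x\in R$ there is $e\in Idem(R)$ with $x-e\in I$; $R$ is weakly $I$-clean if for every $x\in R$ there is $e\in Idem(R)$ such that $x-e\in I$ or $x+e\in I$. *)

theory Defs
  imports "HOL-Algebra.Ring" "HOL-Algebra.Ideal" "HOL-Library.FuncSet"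
begin

definition Idems :: "('a, 'm) ring_scheme \<Rightarrow> 'a set" where
  "Idems R = {e \<in> carrier R. mult R e e = e}"

definition I_clean :: "('a, 'm) ring_scheme \<Rightarrow> 'a set \<Rightarrow> bool" where
  "I_clean R I \<longleftrightarrow> (\<forall>x \<in> carrier R. \<exists>e \<in> Idems R. a_minus R x e \<in> I)"

definition weakly_I_clean :: "('a, 'm) ring_scheme \<Rightarrow> 'a set \<Rightarrow> bool" where
  "weakly_I_clean R I \<longleftrightarrow>
     (\<forall>x \<in> carrier R. \<exists>e \<in> Idems R. a_minus R x e \<in> I \<or> add R x e \<in> I)"

definition prod_ring :: "'i set \<Rightarrow> ('i \<Rightarrow> ('a, 'm) ring_scheme) \<Rightarrow> ('i \<Rightarrow> 'a) ring" where
  "prod_ring \<Lambda> R =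
    \<lparr> carrier = (\<Pi>\<^sub>E \<alpha>\<in>\<Lambda>. carrier (R \<alpha>)),
      mult = (\<lambda>x y. (\<lambda>\<alpha>\<in>\<Lambda>. mult (R \<alpha>) (x \<alpha>) (y \<alpha>))),
      one = (\<lambda>\<alpha>\<in>\<Lambda>. one (R \<alpha>)),
      zero = (\<lambda>\<alpha>\<in>\<Lambda>. zero (R \<alpha>)),
      add = (\<lambda>x y. (\<lambda>\<alpha>\<in>\<Lambda>. add (R \<alpha>) (x \<alpha>) (y \<alpha>))) \<rparr>"

definition prod_set :: "'i set \<Rightarrow> ('i \<Rightarrow> 'a set) \<Rightarrow> ('i \<Rightarrow> 'a) set" where
  "prod_set \<Lambda> I = (\<Pi>\<^sub>E \<alpha>\<in>\<Lambda>. I \<alpha>)"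

end

theory Submission
  imports Defs
begin

lemma pr_carrier: "carrier (prod_ring \<Lambda> R) = (\<Pi>\<^sub>E \<alpha>\<in>\<Lambda>. carrier (R \<alpha>))"
  by (simp add: prod_ring_def)
lemma pr_add: "add (prod_ring \<Lambda> R) x y = (\<lambda>\<alpha>\<in>\<Lambda>. add (R \<alpha>) (x \<alpha>) (y \<alpha>))"
  by (simp add: prod_ring_def)
lemma pr_mult: "mult (prod_ring \<Lambda> R) x y = (\<lambda>\<alpha>\<in>\<Lambda>. mult (R \<alpha>) (x \<alpha>) (y \<alpha>))"
  by (simp add: prod_ring_def)
lemma pr_zero: "zero (prod_ring \<Lambda> R) = (\<lambda>\<alpha>\<in>\<Lambda>. zero (R \<alpha>))"
  by (simp add: prod_ring_def)

lemma r_ainv_closed: "ring R \<Longrightarrow> x \<in> carrier R \<Longrightarrow> a_inv R x \<in> carrier R"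
  by (simp add: abelian_group.a_inv_closed ring.is_abelian_group)
lemma r_rneg: "ring R \<Longrightarrow> x \<in> carrier R \<Longrightarrow> add R x (a_inv R x) = zero R"
  by (simp add: abelian_group.r_neg ring.is_abelian_group)
lemma r_lneg: "ring R \<Longrightarrow> x \<in> carrier R \<Longrightarrow> add R (a_inv R x) x = zero R"
  by (simp add: abelian_group.l_neg ring.is_abelian_group)
lemma r_mineq: "ring R \<Longrightarrow> add R y x = zero R \<Longrightarrow> x \<in> carrier R \<Longrightarrow> y \<in> carrier R \<Longrightarrow> a_inv R x = y"
  by (simp add: abelian_group.minus_equality ring.is_abelian_group)

lemma r_zero_closed: "ring R \<Longrightarrow> zero R \<in> carrier R"
  by (simp add: ring.ring_simprules(2))

lemma pr_ainv:
  assumes rings: "\<And>\<alpha>. \<alpha> \<in> \<Lambda> \<Longrightarrow> ring (R \<alpha>)"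
    and y: "y \<in> carrier (prod_ring \<Lambda> R)"
  shows "a_inv (prod_ring \<Lambda> R) y = (\<lambda>\<alpha>\<in>\<Lambda>. a_inv (R \<alpha>) (y \<alpha>))"
proof -
  let ?z = "(\<lambda>\<alpha>\<in>\<Lambda>. a_inv (R \<alpha>) (y \<alpha>))"
  have yc: "y \<in> (\<Pi>\<^sub>E \<alpha>\<in>\<Lambda>. carrier (R \<alpha>))" using y by (simp add: prod_ring_def)
  have zc: "?z \<in> (\<Pi>\<^sub>E \<alpha>\<in>\<Lambda>. carrier (R \<alpha>))"
    using yc rings by (auto simp: PiE_iff intro!: r_ainv_closed)
  have s1: "add (prod_ring \<Lambda> R) y ?z = zero (prod_ring \<Lambda> R)"
    using yc rings by (auto simp: pr_add pr_zero PiE_iff intro!: restrict_ext r_rneg)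
  have s2: "add (prod_ring \<Lambda> R) ?z y = zero (prod_ring \<Lambda> R)"
    using yc rings by (auto simp: pr_add pr_zero PiE_iff intro!: restrict_ext r_lneg)
  have uniq: "w = ?z" if wc: "w \<in> (\<Pi>\<^sub>E \<alpha>\<in>\<Lambda>. carrier (R \<alpha>))"
     and wy: "add (prod_ring \<Lambda> R) w y = zero (prod_ring \<Lambda> R)" for w
  proof (rule PiE_ext[OF wc zc])
    fix \<alpha> assume a: "\<alpha> \<in> \<Lambda>"
    have "add (R \<alpha>) (w \<alpha>) (y \<alpha>) = zero (R \<alpha>)"
      using fun_cong[OF wy, of \<alpha>] a by (simp add: pr_add pr_zero)
    hence "a_inv (R \<alpha>) (y \<alpha>) = w \<alpha>"
      using r_mineq[OF rings[OF a]] wc yc a by (auto simp: PiE_iff)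
    thus "w \<alpha> = ?z \<alpha>" using a by simp
  qed
  define z where "z = ?z"
  have "m_inv (add_monoid (prod_ring \<Lambda> R)) y = z"
    unfolding m_inv_def
    apply (rule the_equality)
    subgoal using zc s1 s2 unfolding z_def[symmetric] by (simp add: prod_ring_def)
    subgoal for w using uniq[of w] unfolding z_def[symmetric] by (simp add: prod_ring_def)
    done
  thus ?thesis by (simp add: a_inv_def z_def)
qed

lemma pr_minus:
  assumes rings: "\<And>\<alpha>. \<alpha> \<in> \<Lambda> \<Longrightarrow> ring (R \<alpha>)"
    and y: "y \<in> carrier (prod_ring \<Lambda> R)"
  shows "a_minus (prod_ring \<Lambda> R) x y = (\<lambda>\<alpha>\<in>\<Lambda>. a_minus (R \<alpha>) (x \<alpha>) (y \<alpha>))"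
  using pr_ainv[OF rings y] by (auto simp add: a_minus_def pr_add intro!: restrict_ext)

lemma pr_idem:
  "e \<in> Idems (prod_ring \<Lambda> R) \<longleftrightarrow> e \<in> carrier (prod_ring \<Lambda> R) \<and> (\<forall>\<alpha>\<in>\<Lambda>. e \<alpha> \<in> Idems (R \<alpha>))"
proof
  assume "e \<in> Idems (prod_ring \<Lambda> R)"
  hence c: "e \<in> (\<Pi>\<^sub>E \<alpha>\<in>\<Lambda>. carrier (R \<alpha>))" and m: "(\<lambda>\<alpha>\<in>\<Lambda>. mult (R \<alpha>) (e \<alpha>) (e \<alpha>)) = e"
    by (auto simp: Idems_def prod_ring_def)
  show "e \<in> carrier (prod_ring \<Lambda> R) \<and> (\<forall>\<alpha>\<in>\<Lambda>. e \<alpha> \<in> Idems (R \<alpha>))"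
  proof (intro conjI ballI)
    show "e \<in> carrier (prod_ring \<Lambda> R)" using c by (simp add: prod_ring_def)
    fix \<alpha> assume a: "\<alpha> \<in> \<Lambda>"
    show "e \<alpha> \<in> Idems (R \<alpha>)" using fun_cong[OF m, of \<alpha>] a c by (auto simp: Idems_def)
  qed
next
  assume h: "e \<in> carrier (prod_ring \<Lambda> R) \<and> (\<forall>\<alpha>\<in>\<Lambda>. e \<alpha> \<in> Idems (R \<alpha>))"
  hence c: "e \<in> (\<Pi>\<^sub>E \<alpha>\<in>\<Lambda>. carrier (R \<alpha>))" by (simp add: prod_ring_def)
  have "(\<lambda>\<alpha>\<in>\<Lambda>. mult (R \<alpha>) (e \<alpha>) (e \<alpha>)) = e"
    by (rule PiE_ext[OF _ c]) (use h c in \<open>auto simp: Idems_def\<close>)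
  thus "e \<in> Idems (prod_ring \<Lambda> R)" using h by (simp add: Idems_def prod_ring_def)
qed

lemma neg_plus:
  assumes "ring R" "ideal I R" "x \<in> carrier R" "f \<in> carrier R" "a_minus R (a_inv R x) f \<in> I"
  shows "add R x f \<in> I"
proof -
  interpret ring R by fact
  interpret ideal I R by fact
  have "a_inv R (a_minus R (a_inv R x) f) \<in> I" using assms(5) by (rule a_inv_closed)
  also have "a_inv R (a_minus R (a_inv R x) f) = add R x f"
    using assms(3,4) by (simp add: a_minus_def minus_add minus_minus)
  finally show ?thesis .
qed

lemma neg_minus:
  assumes "ring R" "ideal I R" "x \<in> carrier R" "f \<in> carrier R" "add R (a_inv R x) f \<in> I"
  shows "a_minus R x f \<in> I"
proof -
  interpret ring R by fact
  interpret ideal I R by fact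
  have "a_inv R (add R (a_inv R x) f) \<in> I" using assms(5) by (rule a_inv_closed)
  also have "a_inv R (add R (a_inv R x) f) = a_minus R x f"
    using assms(3,4) by (simp add: a_minus_def minus_add minus_minus)
  finally show ?thesis .
qed


lemma ideal_sub: "ideal I R \<Longrightarrow> I \<subseteq> carrier R"
  by (meson additive_subgroup.a_subset ideal.axioms(1))

lemma ideal_neg: "ideal I R \<Longrightarrow> x \<in> I \<Longrightarrow> a_inv R x \<in> I"
  by (meson additive_subgroup.a_inv_closed ideal.axioms(1))

theorem mainTheorem1:
  fixes \<Lambda> :: "'i set"
    and R :: "'i \<Rightarrow> ('a, 'm) ring_scheme"
    and I :: "'i \<Rightarrow> 'a set"
  assumes rings: "\<And>\<alpha>. \<alpha> \<in> \<Lambda> \<Longrightarrow> ring (R \<alpha>)"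
    and ideals: "\<And>\<alpha>. \<alpha> \<in> \<Lambda> \<Longrightarrow> ideal (I \<alpha>) (R \<alpha>)"
  shows "weakly_I_clean (prod_ring \<Lambda> R) (prod_set \<Lambda> I) \<longleftrightarrow>
           ((\<forall>\<alpha> \<in> \<Lambda>. weakly_I_clean (R \<alpha>) (I \<alpha>)) \<and>
            (\<forall>\<alpha> \<in> \<Lambda>. \<forall>\<beta> \<in> \<Lambda>.
               \<not> I_clean (R \<alpha>) (I \<alpha>) \<and> \<not> I_clean (R \<beta>) (I \<beta>) \<longrightarrow> \<alpha> = \<beta>))"
proof
  let ?P = "prod_ring \<Lambda> R"
  assume W: "weakly_I_clean ?P (prod_set \<Lambda> I)"
  have key: "\<exists>e. (\<forall>\<alpha>\<in>\<Lambda>. e \<alpha> \<in> Idems (R \<alpha>)) \<and>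
     ((\<forall>\<alpha>\<in>\<Lambda>. a_minus (R \<alpha>) (x \<alpha>) (e \<alpha>) \<in> I \<alpha>) \<or> (\<forall>\<alpha>\<in>\<Lambda>. add (R \<alpha>) (x \<alpha>) (e \<alpha>) \<in> I \<alpha>))"
    if xc: "\<And>\<alpha>. \<alpha> \<in> \<Lambda> \<Longrightarrow> x \<alpha> \<in> carrier (R \<alpha>)" for x
  proof -
    have "restrict x \<Lambda> \<in> carrier ?P" using xc by (simp add: pr_carrier)
    then obtain e where e: "e \<in> Idems ?P" and
      h: "a_minus ?P (restrict x \<Lambda>) e \<in> prod_set \<Lambda> I \<or> add ?P (restrict x \<Lambda>) e \<in> prod_set \<Lambda> I"
      using W unfolding weakly_I_clean_def by blast
    have ec: "e \<in> carrier ?P" and ei: "\<forall>\<alpha>\<in>\<Lambda>. e \<alpha> \<in> Idems (R \<alpha>)" using e pr_idem by blast+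
    show ?thesis
      using h ei by (auto simp: pr_minus[OF rings ec] pr_add prod_set_def PiE_iff)
  qed
  show "(\<forall>\<alpha> \<in> \<Lambda>. weakly_I_clean (R \<alpha>) (I \<alpha>)) \<and>
            (\<forall>\<alpha> \<in> \<Lambda>. \<forall>\<beta> \<in> \<Lambda>.
               \<not> I_clean (R \<alpha>) (I \<alpha>) \<and> \<not> I_clean (R \<beta>) (I \<beta>) \<longrightarrow> \<alpha> = \<beta>)"
  proof (intro conjI ballI impI)
    fix \<alpha> assume a: "\<alpha> \<in> \<Lambda>"
    show "weakly_I_clean (R \<alpha>) (I \<alpha>)" unfolding weakly_I_clean_def
    proof
      fix xa assume xa: "xa \<in> carrier (R \<alpha>)"
      define x where "x = (\<lambda>\<beta>. if \<beta> = \<alpha> then xa else zero (R \<beta>))"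
      have "\<And>\<beta>. \<beta> \<in> \<Lambda> \<Longrightarrow> x \<beta> \<in> carrier (R \<beta>)"
        using xa rings r_zero_closed unfolding x_def by (simp add: r_zero_closed)
      from key[OF this] obtain e where ei: "(\<forall>\<alpha>\<in>\<Lambda>. e \<alpha> \<in> Idems (R \<alpha>))" and h: 
     "((\<forall>\<alpha>\<in>\<Lambda>. a_minus (R \<alpha>) (x \<alpha>) (e \<alpha>) \<in> I \<alpha>) \<or> (\<forall>\<alpha>\<in>\<Lambda>. add (R \<alpha>) (x \<alpha>) (e \<alpha>) \<in> I \<alpha>))"
        by blast
      have "a_minus (R \<alpha>) xa (e \<alpha>) \<in> I \<alpha> \<or> add (R \<alpha>) xa (e \<alpha>) \<in> I \<alpha>"
      proof -
        have xe: "x \<alpha> = xa" by (simp add: x_def)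
        from h show ?thesis
        proof
          assume "\<forall>\<alpha>\<in>\<Lambda>. a_minus (R \<alpha>) (x \<alpha>) (e \<alpha>) \<in> I \<alpha>"
          thus ?thesis using a xe by metis
        next
          assume "\<forall>\<alpha>\<in>\<Lambda>. add (R \<alpha>) (x \<alpha>) (e \<alpha>) \<in> I \<alpha>"
          thus ?thesis using a xe by metis
        qed
      qed
      thus "\<exists>e\<in>Idems (R \<alpha>). a_minus (R \<alpha>) xa e \<in> I \<alpha> \<or> add (R \<alpha>) xa e \<in> I \<alpha>"
        using a ei by blast
    qed
  next
    fix \<alpha> \<beta> assume a: "\<alpha> \<in> \<Lambda>" and b: "\<beta> \<in> \<Lambda>"
      and nc: "\<not> I_clean (R \<alpha>) (I \<alpha>) \<and> \<not> I_clean (R \<beta>) (I \<beta>)"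
    show "\<alpha> = \<beta>"
    proof (rule ccontr)
      assume ne: "\<alpha> \<noteq> \<beta>"
      obtain xa where xa: "xa \<in> carrier (R \<alpha>)" and nxa: "\<forall>e\<in>Idems (R \<alpha>). a_minus (R \<alpha>) xa e \<notin> I \<alpha>"
        using nc unfolding I_clean_def by blast
      obtain xb where xb: "xb \<in> carrier (R \<beta>)" and nxb: "\<forall>e\<in>Idems (R \<beta>). a_minus (R \<beta>) xb e \<notin> I \<beta>"
        using nc unfolding I_clean_def by blast
      define x where "x = (\<lambda>\<gamma>. if \<gamma> = \<alpha> then xa else if \<gamma> = \<beta> then a_inv (R \<beta>) xb else zero (R \<gamma>))"
      have "\<And>\<gamma>. \<gamma> \<in> \<Lambda> \<Longrightarrow> x \<gamma> \<in> carrier (R \<gamma>)"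
        using xa xb rings b unfolding x_def by (simp add: r_zero_closed r_ainv_closed)
      from key[OF this] obtain e where ei: "\<forall>\<alpha>\<in>\<Lambda>. e \<alpha> \<in> Idems (R \<alpha>)" and
        h: "(\<forall>\<alpha>\<in>\<Lambda>. a_minus (R \<alpha>) (x \<alpha>) (e \<alpha>) \<in> I \<alpha>) \<or> (\<forall>\<alpha>\<in>\<Lambda>. add (R \<alpha>) (x \<alpha>) (e \<alpha>) \<in> I \<alpha>)"
        by blast
      show False
      proof (cases "\<forall>\<alpha>\<in>\<Lambda>. a_minus (R \<alpha>) (x \<alpha>) (e \<alpha>) \<in> I \<alpha>")
        case True
        hence "a_minus (R \<alpha>) (x \<alpha>) (e \<alpha>) \<in> I \<alpha>" using a by blast
        moreover have "x \<alpha> = xa" by (simp add: x_def)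
        ultimately show ?thesis using a ei nxa by metis
      next
        case False
        hence "add (R \<beta>) (x \<beta>) (e \<beta>) \<in> I \<beta>" using h b by blast
        moreover have "x \<beta> = a_inv (R \<beta>) xb" using ne by (simp add: x_def)
        ultimately have "add (R \<beta>) (a_inv (R \<beta>) xb) (e \<beta>) \<in> I \<beta>" by simp
        hence "a_minus (R \<beta>) xb (e \<beta>) \<in> I \<beta>"
          using neg_minus[OF rings[OF b] ideals[OF b] xb] ei b by (auto simp: Idems_def)
        thus False using nxb ei b by auto
      qed
    qed
  qed
next
  let ?P = "prod_ring \<Lambda> R"
  assume H: "(\<forall>\<alpha> \<in> \<Lambda>. weakly_I_clean (R \<alpha>) (I \<alpha>)) \<and>
            (\<forall>\<alpha> \<in> \<Lambda>. \<forall>\<beta> \<in> \<Lambda>.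
               \<not> I_clean (R \<alpha>) (I \<alpha>) \<and> \<not> I_clean (R \<beta>) (I \<beta>) \<longrightarrow> \<alpha> = \<beta>)"
  show "weakly_I_clean ?P (prod_set \<Lambda> I)" unfolding weakly_I_clean_def
  proof
    fix x assume x: "x \<in> carrier ?P"
    have xc: "\<forall>\<alpha>\<in>\<Lambda>. x \<alpha> \<in> carrier (R \<alpha>)" using x by (simp add: pr_carrier PiE_iff)
    have minus_case: "\<exists>e\<in>Idems ?P. a_minus ?P x e \<in> prod_set \<Lambda> I"
      if hm: "\<forall>\<alpha>\<in>\<Lambda>. \<exists>f\<in>Idems (R \<alpha>). a_minus (R \<alpha>) (x \<alpha>) f \<in> I \<alpha>"
    proof -
      have "\<forall>\<alpha>\<in>\<Lambda>. \<exists>f. f \<in> Idems (R \<alpha>) \<and> a_minus (R \<alpha>) (x \<alpha>) f \<in> I \<alpha>"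
        using hm unfolding Bex_def .
      from bchoice[OF this] obtain g where g: "\<forall>\<alpha>\<in>\<Lambda>. g \<alpha> \<in> Idems (R \<alpha>) \<and> a_minus (R \<alpha>) (x \<alpha>) (g \<alpha>) \<in> I \<alpha>"
        by blast
      have ec: "restrict g \<Lambda> \<in> carrier ?P" using g by (auto simp: pr_carrier Idems_def)
      have "restrict g \<Lambda> \<in> Idems ?P" using ec g by (auto simp: pr_idem)
      moreover have "a_minus ?P x (restrict g \<Lambda>) \<in> prod_set \<Lambda> I"
        using g by (simp add: pr_minus[OF rings ec] prod_set_def)
      ultimately show ?thesis by blast
    qed
    have plus_case: "\<exists>e\<in>Idems ?P. add ?P x e \<in> prod_set \<Lambda> I"
      if hm: "\<forall>\<alpha>\<in>\<Lambda>. \<exists>f\<in>Idems (R \<alpha>). add (R \<alpha>) (x \<alpha>) f \<in> I \<alpha>"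
    proof -
      have "\<forall>\<alpha>\<in>\<Lambda>. \<exists>f. f \<in> Idems (R \<alpha>) \<and> add (R \<alpha>) (x \<alpha>) f \<in> I \<alpha>"
        using hm unfolding Bex_def .
      from bchoice[OF this] obtain g where g: "\<forall>\<alpha>\<in>\<Lambda>. g \<alpha> \<in> Idems (R \<alpha>) \<and> add (R \<alpha>) (x \<alpha>) (g \<alpha>) \<in> I \<alpha>"
        by blast
      have ec: "restrict g \<Lambda> \<in> carrier ?P" using g by (auto simp: pr_carrier Idems_def)
      have "restrict g \<Lambda> \<in> Idems ?P" using ec g by (auto simp: pr_idem)
      moreover have "add ?P x (restrict g \<Lambda>) \<in> prod_set \<Lambda> I"
        using g by (simp add: pr_add prod_set_def)
      ultimately show ?thesis by blast
    qed
    show "\<exists>e\<in>Idems ?P. a_minus ?P x e \<in> prod_set \<Lambda> I \<or> add ?P x e \<in> prod_set \<Lambda> I"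
    proof (cases "\<forall>\<alpha>\<in>\<Lambda>. I_clean (R \<alpha>) (I \<alpha>)")
      case True
      hence "\<forall>\<alpha>\<in>\<Lambda>. \<exists>f\<in>Idems (R \<alpha>). a_minus (R \<alpha>) (x \<alpha>) f \<in> I \<alpha>"
        using xc unfolding I_clean_def by blast
      thus ?thesis using minus_case by blast
    next
      case False
      then obtain \<alpha>0 where a0: "\<alpha>0 \<in> \<Lambda>" and nc: "\<not> I_clean (R \<alpha>0) (I \<alpha>0)" by blast
      have cl: "I_clean (R \<beta>) (I \<beta>)" if "\<beta> \<in> \<Lambda>" "\<beta> \<noteq> \<alpha>0" for \<beta>
      proof (rule ccontr)
        assume "\<not> I_clean (R \<beta>) (I \<beta>)"
        hence "\<alpha>0 = \<beta>" using bspec[OF bspec[OF conjunct2[OF H] a0] that(1)] nc by blast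
        thus False using that(2) by simp
      qed
      obtain f0 where f0: "f0 \<in> Idems (R \<alpha>0)"
        and hf: "a_minus (R \<alpha>0) (x \<alpha>0) f0 \<in> I \<alpha>0 \<or> add (R \<alpha>0) (x \<alpha>0) f0 \<in> I \<alpha>0"
      proof -
        have "weakly_I_clean (R \<alpha>0) (I \<alpha>0)" using bspec[OF conjunct1[OF H] a0] .
        moreover have "x \<alpha>0 \<in> carrier (R \<alpha>0)" using xc a0 by simp
        ultimately show ?thesis using that unfolding weakly_I_clean_def by blast
      qed
      show ?thesis
      proof (cases "a_minus (R \<alpha>0) (x \<alpha>0) f0 \<in> I \<alpha>0")
        case True
        have "\<forall>\<alpha>\<in>\<Lambda>. \<exists>f\<in>Idems (R \<alpha>). a_minus (R \<alpha>) (x \<alpha>) f \<in> I \<alpha>"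
        proof
          fix \<alpha> assume a: "\<alpha> \<in> \<Lambda>"
          show "\<exists>f\<in>Idems (R \<alpha>). a_minus (R \<alpha>) (x \<alpha>) f \<in> I \<alpha>"
          proof (cases "\<alpha> = \<alpha>0")
            case True thus ?thesis using f0 \<open>a_minus (R \<alpha>0) (x \<alpha>0) f0 \<in> I \<alpha>0\<close> by blast
          next
            case False thus ?thesis using cl[OF a False] xc a unfolding I_clean_def by blast
          qed
        qed
        thus ?thesis using minus_case by blast
      next
        case False
        hence p0: "add (R \<alpha>0) (x \<alpha>0) f0 \<in> I \<alpha>0" using hf by blast
        have "\<forall>\<alpha>\<in>\<Lambda>. \<exists>f\<in>Idems (R \<alpha>). add (R \<alpha>) (x \<alpha>) f \<in> I \<alpha>"
        proof
          fix \<alpha> assume a: "\<alpha> \<in> \<Lambda>"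
          show "\<exists>f\<in>Idems (R \<alpha>). add (R \<alpha>) (x \<alpha>) f \<in> I \<alpha>"
          proof (cases "\<alpha> = \<alpha>0")
            case True thus ?thesis using f0 p0 by blast
          next
            case False
            have xa: "x \<alpha> \<in> carrier (R \<alpha>)" using xc a by blast
            have "a_inv (R \<alpha>) (x \<alpha>) \<in> carrier (R \<alpha>)" using r_ainv_closed[OF rings[OF a] xa] .
            then obtain f where f: "f \<in> Idems (R \<alpha>)" and
              hm: "a_minus (R \<alpha>) (a_inv (R \<alpha>) (x \<alpha>)) f \<in> I \<alpha>"
              using cl[OF a False] unfolding I_clean_def by blast
            have "add (R \<alpha>) (x \<alpha>) f \<in> I \<alpha>"
              using neg_plus[OF rings[OF a] ideals[OF a] xa _ hm] f by (simp add: Idems_def)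
            thus ?thesis using f by blast
          qed
        qed
        thus ?thesis using plus_case by blast
      qed
    qed
  qed
qed

end
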